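(* Let $a\in\hat{\mathbb Z}$, $Y^*\in C_+([0,\infty))$, $F\in L^1_{\mathrm{loc}}([0,\infty))$ with $F\ge0$, and let $(\mathscr G_t)$ be a filtration to which $Y^*$, $F$ and $\mathbf W$ are adapted and with respect to which $\mathbf W$ is a Brownian motion. Suppose $Y^*(t)=Y^*(0)+W_a(t)+\beta\int_0^t\big(\frac1{Y^*(s)}-F(s)\big)ds$ for all $t\ge0$. Then for all $t'\le t''$ in $[0,\infty)$, almost surely, $Y^*(t'')-\inf_{s\in[t',t'']}Y^*(s)=\sup_{s\in[t',t'']}(Y^*(t'')-Y^*(s))\le Q^{t'}_a(t'')$ and $\sup_{s<t,\ s,t\in[t',t'']}(Y^*(t)-Y^*(s))\le Q^{t',t''}_a:=\sup_{t\in[t',t'']}Q^{t'}_a(t)$.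
   Context: Fixed $\beta\ge1$. $\hat{\mathbb Z}=\tfrac12+\mathbb Z$; $W_a=B_{a+1/2}-B_{a-1/2}$ where $(B_i)_{i\in\mathbb Z}$ are independent standard Brownian motions; $C_+([0,\infty))=\{y\in C([0,\infty)):y(t)>0\ \forall t\}$. For $t_1\ge0$, $Q^{t_1}_a$ denotes the Bessel-type process started from $0$ at time $t_1$: the process in $C([t_1,\infty))$, strictly positive on $(t_1,\infty)$, solving $Q^{t_1}_a(t)=W_a(t)-W_a(t_1)+\int_{t_1}^t\frac{\beta}{Q^{t_1}_a(s)}ds$, $t\ge t_1$. *)

theory Defs
  imports "HOL-Probability.Probability"
begin

definition filtration :: "'w measure \<Rightarrow> (real \<Rightarrow> 'w measure) \<Rightarrow> bool" where
  "filtration M G \<longleftrightarrow> (\<forall>t\<ge>0. subalgebra M (G t)) \<and>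
     (\<forall>s t. 0 \<le> s \<longrightarrow> s \<le> t \<longrightarrow> sets (G s) \<subseteq> sets (G t))"

definition adapted :: "(real \<Rightarrow> 'w measure) \<Rightarrow> (real \<Rightarrow> 'w \<Rightarrow> real) \<Rightarrow> bool" where
  "adapted G X \<longleftrightarrow> (\<forall>t\<ge>0. X t \<in> borel_measurable (G t))"

definition gen_events :: "'w measure \<Rightarrow> ('w \<Rightarrow> real) \<Rightarrow> 'w set set" where
  "gen_events M X = {X -` A \<inter> space M | A. A \<in> sets borel}"

definition BM_family :: "'w measure \<Rightarrow> (real \<Rightarrow> 'w measure) \<Rightarrow> (int \<Rightarrow> real \<Rightarrow> 'w \<Rightarrow> real) \<Rightarrow> bool" where
  "BM_family M G B \<longleftrightarrow>
     (\<forall>i. adapted G (B i)) \<and>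
     (\<forall>i \<omega>. \<omega> \<in> space M \<longrightarrow> B i 0 \<omega> = 0 \<and> continuous_on {0..} (\<lambda>t. B i t \<omega>)) \<and>
     (\<forall>i s t. 0 \<le> s \<longrightarrow> s < t \<longrightarrow>
        distributed M lborel (\<lambda>\<omega>. B i t \<omega> - B i s \<omega>) (\<lambda>x. ennreal (normal_density 0 (sqrt (t - s)) x))) \<and>
     (\<forall>s t. 0 \<le> s \<longrightarrow> s \<le> t \<longrightarrow>
        prob_space.indep_sets M
          (\<lambda>j. case j of None \<Rightarrow> sets (G s)
                       | Some i \<Rightarrow> gen_events M (\<lambda>\<omega>. B i t \<omega> - B i s \<omega>)) UNIV)"

text \<open>W_a = B_{a+1/2} - B_{a-1/2} for a \<in> 1/2 + \<int>.\<close>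
definition Wa :: "(int \<Rightarrow> real \<Rightarrow> 'w \<Rightarrow> real) \<Rightarrow> real \<Rightarrow> real \<Rightarrow> 'w \<Rightarrow> real" where
  "Wa B a t \<omega> = B \<lfloor>a + 1/2\<rfloor> t \<omega> - B \<lfloor>a - 1/2\<rfloor> t \<omega>"

text \<open>Pathwise characterisation of the Bessel-type process Q^{t1}_a started from 0 at t1
  (for the sample point \<omega>).\<close>
definition is_Q_path :: "real \<Rightarrow> (real \<Rightarrow> real) \<Rightarrow> real \<Rightarrow> (real \<Rightarrow> real) \<Rightarrow> bool" where
  "is_Q_path \<beta> w t1 q \<longleftrightarrow>
     continuous_on {t1..} q \<and> q t1 = 0 \<and> (\<forall>t>t1. q t > 0) \<and>
     (\<forall>t\<ge>t1. set_integrable lborel {t1..t} (\<lambda>s. \<beta> / q s) \<and>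
              q t = w t - w t1 + (LBINT s:{t1..t}. \<beta> / q s))"

end

theory Submission imports Defs begin

lemma key:
  fixes y f q w :: "real \<Rightarrow> real" and \<beta> t' s t :: real
  assumes bpos: "\<beta> > 0" and yc: "continuous_on {0..} y" and ypos: "\<And>r. r \<ge> 0 \<Longrightarrow> y r > 0"
    and fint: "\<And>r. r \<ge> 0 \<Longrightarrow> f integrable_on {0..r}"
    and fnn: "\<And>r. r \<ge> 0 \<Longrightarrow> f r \<ge> 0"
    and yeq: "\<And>r. r \<ge> 0 \<Longrightarrow> y r = y 0 + w r + \<beta> * integral {0..r} (\<lambda>r. 1 / y r - f r)"
    and qc: "continuous_on {t'..} q" and q0: "q t' = 0" and qpos: "\<And>r. r > t' \<Longrightarrow> q r > 0"
    and qint: "\<And>r. r \<ge> t' \<Longrightarrow> (\<lambda>r. \<beta> / q r) integrable_on {t'..r}"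
    and qeq: "\<And>r. r \<ge> t' \<Longrightarrow> q r = w r - w t' + integral {t'..r} (\<lambda>r. \<beta> / q r)"
    and t0: "0 \<le> t'" and ts: "t' \<le> s" and st: "s \<le> t"
  shows "y t - y s \<le> q t"
proof (rule ccontr)
  assume "\<not> ?thesis"
  hence Dt: "y t - y s - q t > 0" by simp
  define D where "D r = y r - y s - q r" for r
  define S where "S = {r \<in> {s..t}. D r \<le> 0}"
  have qnn: "q r \<ge> 0" if "r \<ge> t'" for r
    using that q0 qpos[of r] by (cases "r = t'") auto
  have yc': "continuous_on {s..t} y" by (rule continuous_on_subset[OF yc]) (use t0 ts in auto)
  have qc': "continuous_on {s..t} q" by (rule continuous_on_subset[OF qc]) (use ts in auto)
  have Dc: "continuous_on {s..t} D" unfolding D_def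
    by (intro continuous_intros yc' qc')
  have "closed S" unfolding S_def
    using continuous_on_closed_Collect_le[OF Dc continuous_on_const, of 0] by simp
  moreover have "s \<in> S" unfolding S_def D_def using st qnn[OF ts] by auto
  moreover have "bdd_above S" unfolding S_def by (rule bdd_aboveI[of _ t]) auto
  ultimately have uS: "Sup S \<in> S" using closed_contains_Sup by blast
  define u where "u = Sup S"
  have su: "s \<le> u" and ut: "u \<le> t" and Du: "D u \<le> 0" using uS unfolding u_def S_def by auto
  have "u \<noteq> t" using Du Dt unfolding D_def by auto
  with ut have ut': "u < t" by simp
  have Dpos: "D r > 0" if "u < r" "r \<le> t" for r
  proof (rule ccontr)
    assume "\<not> D r > 0"
    hence "r \<in> S" using that su unfolding S_def by auto
    hence "r \<le> u" unfolding u_def using \<open>bdd_above S\<close> by (rule cSup_upper)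
    thus False using that by simp
  qed
  define g where "g r = 1 / y r - f r" for r
  define h where "h r = \<beta> / q r" for r
  have gint: "g integrable_on {0..t}" unfolding g_def
  proof (rule integrable_diff)
    have "continuous_on {0..t} (\<lambda>r. 1 / y r)"
      using yc by (intro continuous_intros) (auto intro: continuous_on_subset dest: ypos[THEN less_imp_neq[THEN not_sym]] simp: ypos)
    thus "(\<lambda>r. 1 / y r) integrable_on {0..t}" by (rule integrable_continuous_interval)
    show "f integrable_on {0..t}" using fint t0 ts st by simp
  qed
  have hint: "h integrable_on {t'..t}" unfolding h_def using qint ts st by simp
  have g1: "integral {0..u} g + integral {u..t} g = integral {0..t} g"
    using Henstock_Kurzweil_Integration.integral_combine[of 0 u t, OF _ ut gint] t0 ts su by simp
  have h1: "integral {t'..u} h + integral {u..t} h = integral {t'..t} h"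
    using Henstock_Kurzweil_Integration.integral_combine[of t' u t, OF _ ut hint] su ts by simp
  have "y t - y u = w t - w u + \<beta> * integral {u..t} g"
    using yeq[of t] yeq[of u] t0 ts su ut g1 unfolding g_def by (simp add: algebra_simps flip: distrib_left)
  moreover have "q t - q u = w t - w u + integral {u..t} h"
    using qeq[of t] qeq[of u] ts su ut h1 unfolding h_def by (simp add: algebra_simps)
  moreover have "\<beta> * integral {u..t} g \<le> integral {u..t} h"
  proof -
    have gi: "g integrable_on {u<..<t}" using integrable_on_subinterval[OF gint, of u t] t0 ts su
      by (simp add: integrable_on_open_interval_real)
    have hi: "h integrable_on {u<..<t}" using integrable_on_subinterval[OF hint, of u t] ts su
      by (simp add: integrable_on_open_interval_real)
    have "integral {u<..<t} (\<lambda>r. \<beta> * g r) \<le> integral {u<..<t} h"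
    proof (rule integral_le)
      show "(\<lambda>r. \<beta> * g r) integrable_on {u<..<t}" using gi by (rule integrable_on_mult_right) 
      show "h integrable_on {u<..<t}" by (rule hi)
      fix r assume r: "r \<in> {u<..<t}"
      have "D r > 0" using Dpos r by auto
      hence "y r > q r" using ypos[of s] t0 ts unfolding D_def by auto
      moreover have "q r > 0" using qpos r ts su by auto
      ultimately have "1 / y r < 1 / q r" by (simp add: frac_less2)
      moreover have "f r \<ge> 0" using fnn r t0 ts su by auto
      ultimately have "g r \<le> 1 / q r" unfolding g_def by simp
      thus "\<beta> * g r \<le> h r" unfolding h_def using bpos
        by (metis mult_left_mono less_imp_le times_divide_eq_right mult_1_right)
    qed
    thus ?thesis by (simp add: integral_open_interval_real[symmetric])
  qed
  ultimately have "D t \<le> D u" unfolding D_def by simp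
  thus False using Du Dt unfolding D_def by simp
qed

theorem lemma3p2:
  fixes M :: "'w measure" and G :: "real \<Rightarrow> 'w measure"
    and B :: "int \<Rightarrow> real \<Rightarrow> 'w \<Rightarrow> real"
    and Y F Q :: "real \<Rightarrow> 'w \<Rightarrow> real"
    and \<beta> a t' t'' :: real
  assumes "prob_space M"
    and "\<beta> \<ge> 1"
    and "a - 1/2 \<in> \<int>"
    and "filtration M G"
    and "BM_family M G B"
    and "adapted G Y" and "adapted G F"
    and "\<And>\<omega>. \<omega> \<in> space M \<Longrightarrow> continuous_on {0..} (\<lambda>t. Y t \<omega>) \<and> (\<forall>t\<ge>0. Y t \<omega> > 0)"
    and "\<And>\<omega> t. \<omega> \<in> space M \<Longrightarrow> t \<ge> 0 \<Longrightarrow> F t \<omega> \<ge> 0"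
    and "\<And>\<omega> t. \<omega> \<in> space M \<Longrightarrow> t \<ge> 0 \<Longrightarrow> set_integrable lborel {0..t} (\<lambda>s. F s \<omega>)"
    and "AE \<omega> in M. \<forall>t\<ge>0. Y t \<omega> = Y 0 \<omega> + Wa B a t \<omega>
            + \<beta> * (LBINT s:{0..t}. (1 / Y s \<omega> - F s \<omega>))"
    and "AE \<omega> in M. is_Q_path \<beta> (\<lambda>t. Wa B a t \<omega>) t' (\<lambda>t. Q t \<omega>)"
    and "0 \<le> t'" and "t' \<le> t''"
  shows "AE \<omega> in M.
     Y t'' \<omega> - (INF s\<in>{t'..t''}. Y s \<omega>) = (SUP s\<in>{t'..t''}. Y t'' \<omega> - Y s \<omega>) \<and>
     (SUP s\<in>{t'..t''}. Y t'' \<omega> - Y s \<omega>) \<le> Q t'' \<omega> \<and>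
     (\<forall>s t. t' \<le> s \<longrightarrow> s < t \<longrightarrow> t \<le> t'' \<longrightarrow> Y t \<omega> - Y s \<omega> \<le> (SUP u\<in>{t'..t''}. Q u \<omega>))"
  using assms(11,12) AE_space
proof eventually_elim
  case (elim \<omega>)
  note yeqL = elim(1) and qp = elim(2) and om = elim(3)
  define y where "y t = Y t \<omega>" for t
  define f where "f t = F t \<omega>" for t
  define q where "q t = Q t \<omega>" for t
  define w where "w t = Wa B a t \<omega>" for t
  have yc: "continuous_on {0..} y" and ypos: "\<And>r. r \<ge> 0 \<Longrightarrow> y r > 0"
    using assms(8)[OF om] unfolding y_def by auto
  have fsi: "\<And>r. r \<ge> 0 \<Longrightarrow> set_integrable lborel {0..r} f"
    using assms(10)[OF om] unfolding f_def by auto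
  have fint: "\<And>r. r \<ge> 0 \<Longrightarrow> f integrable_on {0..r}"
    using fsi set_borel_integral_eq_integral(1) by blast
  have fnn: "\<And>r. r \<ge> 0 \<Longrightarrow> f r \<ge> 0" using assms(9)[OF om] unfolding f_def by auto
  have yeq: "y r = y 0 + w r + \<beta> * integral {0..r} (\<lambda>r. 1 / y r - f r)" if r: "r \<ge> 0" for r
  proof -
    have "continuous_on {0..r} (\<lambda>r. 1 / y r)"
      using yc by (intro continuous_intros) (auto intro: continuous_on_subset dest: ypos[THEN less_imp_neq[THEN not_sym]] simp: ypos)
    hence "set_integrable lborel {0..r} (\<lambda>r. 1 / y r)" by (rule borel_integrable_atLeastAtMost')
    hence "set_integrable lborel {0..r} (\<lambda>r. 1 / y r - f r)" using fsi[OF r] by (rule set_integral_diff(1))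
    hence "(LBINT s:{0..r}. (1 / y s - f s)) = integral {0..r} (\<lambda>r. 1 / y r - f r)"
      by (rule set_borel_integral_eq_integral(2))
    moreover have "Y r \<omega> = Y 0 \<omega> + Wa B a r \<omega> + \<beta> * (LBINT s:{0..r}. (1 / Y s \<omega> - F s \<omega>))"
      using yeqL r by blast
    ultimately show ?thesis unfolding y_def f_def w_def by simp
  qed
  have qc: "continuous_on {t'..} q" and q0: "q t' = 0" and qpos: "\<And>r. r > t' \<Longrightarrow> q r > 0"
    using qp unfolding is_Q_path_def q_def by auto
  have qsi: "set_integrable lborel {t'..r} (\<lambda>r. \<beta> / q r)"
    and qeqL: "q r = w r - w t' + (LBINT s:{t'..r}. \<beta> / q s)" if "r \<ge> t'" for r
    using qp that unfolding is_Q_path_def q_def w_def by auto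
  have qint: "(\<lambda>r. \<beta> / q r) integrable_on {t'..r}" if "r \<ge> t'" for r
    using set_borel_integral_eq_integral(1)[OF qsi[OF that]] .
  have qeq: "q r = w r - w t' + integral {t'..r} (\<lambda>r. \<beta> / q r)" if "r \<ge> t'" for r
    using qeqL[OF that] set_borel_integral_eq_integral(2)[OF qsi[OF that]] by simp
  have K: "y t - y s \<le> q t" if "t' \<le> s" "s \<le> t" for s t
    by (rule key[OF _ yc ypos fint fnn yeq qc q0 qpos qint qeq assms(13) that]) (use assms(2) in auto)
  have qnn: "q r \<ge> 0" if "r \<ge> t'" for r
    using that q0 qpos[of r] by (cases "r = t'") auto
  have ycc: "continuous_on {t'..t''} y" by (rule continuous_on_subset[OF yc]) (use assms(13) in auto)
  have qcc: "continuous_on {t'..t''} q" by (rule continuous_on_subset[OF qc]) auto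
  have bq: "bdd_above (q ` {t'..t''})"
    using compact_continuous_image[OF qcc compact_Icc] by (simp add: bounded_imp_bdd_above compact_imp_bounded)
  have yb: "bdd_below (y ` {t'..t''})"
    using compact_continuous_image[OF ycc compact_Icc] by (simp add: bounded_imp_bdd_below compact_imp_bounded)
  have ne: "{t'..t''} \<noteq> {}" using assms(14) by simp
  have bd: "bdd_above ((\<lambda>s. y t'' - y s) ` {t'..t''})"
    by (rule bdd_aboveI[of _ "q t''"]) (use K assms(14) in auto)
  have E1: "y t'' - (INF s\<in>{t'..t''}. y s) = (SUP s\<in>{t'..t''}. y t'' - y s)"
  proof (rule antisym)
    have "y t'' - (SUP s\<in>{t'..t''}. y t'' - y s) \<le> (INF s\<in>{t'..t''}. y s)"
      by (rule cINF_greatest[OF ne]) (use cSUP_upper[OF _ bd] in force)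
    thus "y t'' - (INF s\<in>{t'..t''}. y s) \<le> (SUP s\<in>{t'..t''}. y t'' - y s)" by simp
    show "(SUP s\<in>{t'..t''}. y t'' - y s) \<le> y t'' - (INF s\<in>{t'..t''}. y s)"
      by (rule cSUP_least[OF ne]) (use cINF_lower[OF yb] in force)
  qed
  have E2: "(SUP s\<in>{t'..t''}. y t'' - y s) \<le> q t''"
    by (rule cSUP_least[OF ne]) (use K in auto)
  have E3: "y t - y s \<le> (SUP u\<in>{t'..t''}. q u)" if "t' \<le> s" "s < t" "t \<le> t''" for s t
  proof -
    have "y t - y s \<le> q t" using K that by auto
    also have "\<dots> \<le> (SUP u\<in>{t'..t''}. q u)" by (rule cSUP_upper[OF _ bq]) (use that in auto)
    finally show ?thesis .
  qed
  show ?case using E1 E2 E3 unfolding y_def q_def by blast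
qed

end
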